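(* Let $G=(X,\Sigma,\longrightarrow,X_0)$ be a plant, $R_i=(Z_i,\Sigma,\longrightarrow,Z_{0i})$ ($i=1,2$) specifications with $R_1\sqsubseteq R_2$, and $\Sigma'=\{\sigma\in\Sigma:z_1\xrightarrow{\sigma}\text{ in }R_1\text{ for some }z_1\in Z_1\}$. Take $\Sigma_r=\Sigma'$ and let $S\in\mathit{SPR}(G,R_2)$. If there exists a cc-simulation $\Phi$ from $S\|G$ to $R_2$ such that $\Phi^{-1}$ is a simulation from $R_2$ to $S\|G$ w.r.t. $\Sigma'$, then $S\in S(R_1,G,R_2)$. In particular, $\mathit{SPR}(G,R_2)\subseteq S(R_1,G,R_2)$ whenever $|Z_{02}|=1$.
   Context: An automaton is a 4-tuple $A=(Q,\Sigma,\longrightarrow,Q_0)$ with state set $Q$, finite event set $\Sigma$, ${\longrightarrow}\subseteq Q\times\Sigma\times Q$ and $\emptyset\neq Q_0\subseteq Q$. Write $q\xrightarrow{\sigma}q'$ for $(q,\sigma,q')\in{\longrightarrow}$, $q\xrightarrow{\sigma}$ if some such $q'$ exists; extend to strings. A state is reachable if reached from an initial state by some string. Events are partitioned into uncontrollable $\Sigma_{uc}$ and controllable $\Sigma_c$; $\Sigma_r\subseteq\Sigma$ denotes the set of required events. For a supervisor $S=(Y,\Sigma,\longrightarrow,Y_0)$, $S\|G=(Y\times X,\Sigma,\longrightarrow,Y_0\times X_0)$ with $(y,x)\xrightarrow{\sigma}(y',x')$ iff $y\xrightarrow{\sigma}y'$ and $x\xrightarrow{\sigma}x'$; $S$ is $\Sigma_{uc}$-admissible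 w.r.t. $G$ if for every reachable $(y,x)$ of $S\|G$ and $\sigma\in\Sigma_{uc}$, $x\xrightarrow{\sigma}$ implies $(y,x)\xrightarrow{\sigma}$. For automata $A_1,A_2$ (state sets $Q_1,Q_2$, initial sets $Q_{01},Q_{02}$) and $\Sigma''\subseteq\Sigma$, $\Phi\subseteq Q_1\times Q_2$ is a simulation w.r.t. $\Sigma''$ if (initial state) every $q_0\in Q_{01}$ has $p_0\in Q_{02}$ with $(q_0,p_0)\in\Phi$ and (forward) for $(q,p)\in\Phi$, $\sigma\in\Sigma''$, $q\xrightarrow{\sigma}q'$ there is $p'$ with $p\xrightarrow{\sigma}p'$, $(q',p')\in\Phi$; a simulation is a simulation w.r.t. $\Sigma$; a cc-simulation is a simulation that also satisfies ($\Sigma_r$-backward): for $(q,p)\in\Phi$, $\sigma\in\Sigma_r$, $p\xrightarrow{\sigma}p'$ there is $q'$ with $q\xrightarrow{\sigma}q'$, $(q',p')\in\Phi$. $A_1\sqsubseteq A_2$, $A_1\sqsubseteq_{cc}A_2$ mean such relations exist; $\Phi^{-1}=\{(p,q):(q,p)\in\Phi\}$. $\mathit{SPR}(G,R)$ is the set of $\Sigma_{uc}$-admissible supervisors $S$ with $S\|G\sqsubseteq_{cc}R$. $S(R_1,G,R_2)$ is the set of all $\Sigma_{uc}$-admissible supervisors $S$ with $R_1\sqsubseteq S\|G\sqsubseteq R_2$ (the $\Sigma_{uc}$-admissible solutions of the $(R_1,G,R_2)$-range control problem). *)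

theory Defs
  imports Main
begin

text \<open>Automata over a common finite event type 'e (the event set Sigma is UNIV :: 'e set).\<close>

record ('s, 'e) automaton =
  states :: "'s set"
  trans  :: "('s \<times> 'e \<times> 's) set"
  init   :: "'s set"

definition wf_aut :: "('s, 'e) automaton \<Rightarrow> bool" where
  "wf_aut A \<longleftrightarrow> trans A \<subseteq> states A \<times> UNIV \<times> states A \<and> init A \<subseteq> states A \<and> init A \<noteq> {}"

definition step_rel :: "('s, 'e) automaton \<Rightarrow> ('s \<times> 's) set" where
  "step_rel A = {(q, q'). \<exists>\<sigma>. (q, \<sigma>, q') \<in> trans A}"

definition reachable :: "('s, 'e) automaton \<Rightarrow> 's set" where
  "reachable A = {q. \<exists>q0 \<in> init A. (q0, q) \<in> (step_rel A)\<^sup>*}"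

definition sync :: "('y, 'e) automaton \<Rightarrow> ('x, 'e) automaton \<Rightarrow> ('y \<times> 'x, 'e) automaton" where
  "sync S G = \<lparr> states = states S \<times> states G,
     trans = {((y, x), \<sigma>, (y', x')). (y, \<sigma>, y') \<in> trans S \<and> (x, \<sigma>, x') \<in> trans G},
     init = init S \<times> init G \<rparr>"

definition admissible :: "'e set \<Rightarrow> ('y, 'e) automaton \<Rightarrow> ('x, 'e) automaton \<Rightarrow> bool" where
  "admissible Euc S G \<longleftrightarrow>
     (\<forall>y x. (y, x) \<in> reachable (sync S G) \<longrightarrow>
        (\<forall>\<sigma> \<in> Euc. (\<exists>x'. (x, \<sigma>, x') \<in> trans G) \<longrightarrow> (\<exists>p'. ((y, x), \<sigma>, p') \<in> trans (sync S G))))"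

definition sim_wrt :: "'e set \<Rightarrow> ('a, 'e) automaton \<Rightarrow> ('b, 'e) automaton \<Rightarrow> ('a \<times> 'b) set \<Rightarrow> bool" where
  "sim_wrt E A1 A2 \<Phi> \<longleftrightarrow>
     (\<forall>q0 \<in> init A1. \<exists>p0 \<in> init A2. (q0, p0) \<in> \<Phi>) \<and>
     (\<forall>q p \<sigma> q'. (q, p) \<in> \<Phi> \<longrightarrow> \<sigma> \<in> E \<longrightarrow> (q, \<sigma>, q') \<in> trans A1 \<longrightarrow>
        (\<exists>p'. (p, \<sigma>, p') \<in> trans A2 \<and> (q', p') \<in> \<Phi>))"

definition sim :: "('a, 'e) automaton \<Rightarrow> ('b, 'e) automaton \<Rightarrow> ('a \<times> 'b) set \<Rightarrow> bool" where
  "sim A1 A2 \<Phi> \<longleftrightarrow> sim_wrt UNIV A1 A2 \<Phi>"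

definition cc_sim :: "'e set \<Rightarrow> ('a, 'e) automaton \<Rightarrow> ('b, 'e) automaton \<Rightarrow> ('a \<times> 'b) set \<Rightarrow> bool" where
  "cc_sim Sr A1 A2 \<Phi> \<longleftrightarrow> sim A1 A2 \<Phi> \<and>
     (\<forall>q p \<sigma> p'. (q, p) \<in> \<Phi> \<longrightarrow> \<sigma> \<in> Sr \<longrightarrow> (p, \<sigma>, p') \<in> trans A2 \<longrightarrow>
        (\<exists>q'. (q, \<sigma>, q') \<in> trans A1 \<and> (q', p') \<in> \<Phi>))"

definition simulated :: "('a, 'e) automaton \<Rightarrow> ('b, 'e) automaton \<Rightarrow> bool" where
  "simulated A1 A2 \<longleftrightarrow> (\<exists>\<Phi>. sim A1 A2 \<Phi>)"

definition cc_simulated :: "'e set \<Rightarrow> ('a, 'e) automaton \<Rightarrow> ('b, 'e) automaton \<Rightarrow> bool" where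
  "cc_simulated Sr A1 A2 \<longleftrightarrow> (\<exists>\<Phi>. cc_sim Sr A1 A2 \<Phi>)"

definition SPR :: "'e set \<Rightarrow> 'e set \<Rightarrow> ('x, 'e) automaton \<Rightarrow> ('r, 'e) automaton \<Rightarrow> ('y, 'e) automaton set" where
  "SPR Euc Sr G R = {S. wf_aut S \<and> admissible Euc S G \<and> cc_simulated Sr (sync S G) R}"

text \<open>S(R1,G,R2): admissible solutions of the range control problem.\<close>
definition range_sols :: "'e set \<Rightarrow> ('r1, 'e) automaton \<Rightarrow> ('x, 'e) automaton \<Rightarrow> ('r2, 'e) automaton \<Rightarrow> ('y, 'e) automaton set" where
  "range_sols Euc R1 G R2 = {S. wf_aut S \<and> admissible Euc S G \<and> simulated R1 (sync S G) \<and> simulated (sync S G) R2}"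

definition enabled_events :: "('s, 'e) automaton \<Rightarrow> 'e set" where
  "enabled_events A = {\<sigma>. \<exists>z \<in> states A. \<exists>z'. (z, \<sigma>, z') \<in> trans A}"

end

theory Submission
  imports Defs
begin

lemma part1:
  fixes G :: "('x, 'e) automaton"
    and R1 :: "('z1, 'e) automaton"
    and R2 :: "('z2, 'e) automaton"
    and S :: "('y, 'e) automaton"
  assumes "wf_aut R1" and "simulated R1 R2"
    and "S \<in> SPR Euc (enabled_events R1) G R2"
    and "cc_sim (enabled_events R1) (sync S G) R2 \<Phi>"
    and "sim_wrt (enabled_events R1) R2 (sync S G) (\<Phi>\<inverse>)"
  shows "S \<in> range_sols Euc R1 G R2"
proof -
  obtain \<Psi> where psi: "sim R1 R2 \<Psi>" using assms(2) unfolding simulated_def by blast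
  have "sim R1 (sync S G) (\<Psi> O \<Phi>\<inverse>)"
    unfolding sim_def sim_wrt_def
  proof (intro conjI allI impI ballI)
    fix q0 assume "q0 \<in> init R1"
    then obtain p0 where "p0 \<in> init R2" "(q0, p0) \<in> \<Psi>" using psi unfolding sim_def sim_wrt_def by blast
    then obtain s0 where "s0 \<in> init (sync S G)" "(p0, s0) \<in> \<Phi>\<inverse>"
      using assms(5) unfolding sim_wrt_def by blast
    then show "\<exists>p0\<in>init (sync S G). (q0, p0) \<in> \<Psi> O \<Phi>\<inverse>" using \<open>(q0, p0) \<in> \<Psi>\<close> by blast
  next
    fix q p \<sigma> q'
    assume h: "(q, p) \<in> \<Psi> O \<Phi>\<inverse>" "\<sigma> \<in> (UNIV::'e set)" "(q, \<sigma>, q') \<in> trans R1"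
    then obtain r where r: "(q, r) \<in> \<Psi>" "(r, p) \<in> \<Phi>\<inverse>" by blast
    have "q \<in> states R1" using h(3) assms(1) unfolding wf_aut_def by blast
    hence ev: "\<sigma> \<in> enabled_events R1" using h(3) unfolding enabled_events_def by blast
    obtain r' where r': "(r, \<sigma>, r') \<in> trans R2" "(q', r') \<in> \<Psi>"
      using psi r(1) h(3) unfolding sim_def sim_wrt_def by blast
    obtain p' where "(p, \<sigma>, p') \<in> trans (sync S G)" "(r', p') \<in> \<Phi>\<inverse>"
      using assms(5) r(2) ev r'(1) unfolding sim_wrt_def by blast
    then show "\<exists>p'. (p, \<sigma>, p') \<in> trans (sync S G) \<and> (q', p') \<in> \<Psi> O \<Phi>\<inverse>"
      using r'(2) by blast
  qed
  moreover have "sim (sync S G) R2 \<Phi>" using assms(4) unfolding cc_sim_def by blast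
  ultimately show ?thesis using assms(3) unfolding SPR_def range_sols_def simulated_def by blast
qed

theorem proposition3:
  fixes G :: "('x, 'e::finite) automaton"
    and R1 :: "('z1, 'e) automaton"
    and R2 :: "('z2, 'e) automaton"
    and S :: "('y, 'e) automaton"
    and Euc :: "'e set"
  assumes "wf_aut G" and "wf_aut R1" and "wf_aut R2"
    and "simulated R1 R2"
  shows "(S \<in> SPR Euc (enabled_events R1) G R2 \<and>
           (\<exists>\<Phi>. cc_sim (enabled_events R1) (sync S G) R2 \<Phi> \<and>
                 sim_wrt (enabled_events R1) R2 (sync S G) (\<Phi>\<inverse>))
          \<longrightarrow> S \<in> range_sols Euc R1 G R2)
       \<and> (card (init R2) = 1 \<longrightarrow>
          (SPR Euc (enabled_events R1) G R2 :: ('y, 'e) automaton set) \<subseteq> range_sols Euc R1 G R2)"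
proof (intro conjI impI subsetI)
  assume "S \<in> SPR Euc (enabled_events R1) G R2 \<and>
           (\<exists>\<Phi>. cc_sim (enabled_events R1) (sync S G) R2 \<Phi> \<and>
                 sim_wrt (enabled_events R1) R2 (sync S G) (\<Phi>\<inverse>))"
  then show "S \<in> range_sols Euc R1 G R2" using part1 assms(2,4) by blast
next
  fix S' :: "('y, 'e) automaton"
  assume c: "card (init R2) = 1" and s: "S' \<in> SPR Euc (enabled_events R1) G R2"
  obtain z0 where z0: "init R2 = {z0}" using c card_1_singletonE by blast
  obtain \<Phi> where phi: "cc_sim (enabled_events R1) (sync S' G) R2 \<Phi>"
    using s unfolding SPR_def cc_simulated_def by blast
  have "init S' \<noteq> {}" using s unfolding SPR_def wf_aut_def by blast
  moreover have "init G \<noteq> {}" using assms(1) unfolding wf_aut_def by blast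
  ultimately obtain s0 where s0: "s0 \<in> init (sync S' G)" unfolding sync_def by auto
  then obtain p0 where "p0 \<in> init R2" "(s0, p0) \<in> \<Phi>"
    using phi unfolding cc_sim_def sim_def sim_wrt_def by blast
  hence "(s0, z0) \<in> \<Phi>" using z0 by simp
  have "sim_wrt (enabled_events R1) R2 (sync S' G) (\<Phi>\<inverse>)"
    unfolding sim_wrt_def
  proof (intro conjI allI impI ballI)
    fix q0 assume "q0 \<in> init R2"
    then show "\<exists>p0\<in>init (sync S' G). (q0, p0) \<in> \<Phi>\<inverse>" using z0 s0 \<open>(s0, z0) \<in> \<Phi>\<close> by auto
  next
    fix q p \<sigma> q'
    assume "(q, p) \<in> \<Phi>\<inverse>" "\<sigma> \<in> enabled_events R1" "(q, \<sigma>, q') \<in> trans R2"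
    then show "\<exists>p'. (p, \<sigma>, p') \<in> trans (sync S' G) \<and> (q', p') \<in> \<Phi>\<inverse>"
      using phi unfolding cc_sim_def by blast
  qed
  then show "S' \<in> range_sols Euc R1 G R2" using part1 assms(2,4) s phi by blast
qed

end
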